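(* Let $\mathbf A\in\mathbb{R}^{N\times N}$, $\mathbf B,\mathbf C\in\mathbb{R}^{N\times n_s}$, fix a sign $\pm$, and let $\mathbf U\in\mathbb{R}^{N\times n}$ be a POD basis with columns $\mathbf u_1,\dots,\mathbf u_n$. Set $\hat{\mathbf A}=\mathbf U^\intercal\mathbf A\mathbf U\in\mathbb{R}^{n\times n}$, $\hat{\mathbf B}=\mathbf U^\intercal\mathbf B$, $\hat{\mathbf C}=\mathbf U^\intercal\mathbf C\in\mathbb{R}^{n\times n_s}$, and suppose $\hat{\mathbf D}\in\mathbb{R}^{n\times n}$ is the unique solution of \[\operatorname*{argmin}_{\mathbf D\in\mathbb{R}^{n\times n}}\|\hat{\mathbf C}-\hat{\mathbf A}\mathbf D\hat{\mathbf B}\|^2\quad\text{subject to}\quad\mathbf D^\intercal=\pm\mathbf D.\] Let $n'<n$, let $\mathbf U'\in\mathbb{R}^{N\times n'}$ consist of the first $n'$ columns of $\mathbf U$ (i.e. the $n-n'$ highest-frequency basis vectors removed), and set $\hat{\mathbf A}'=\mathbf U'^\intercal\mathbf A\mathbf U'$, $\hat{\mathbf B}'=\mathbf U'^\intercal\mathbf B$, $\hat{\mathbf C}'=\mathbf U'^\intercal\mathbf C$, and let $\hat{\mathbf D}'$ be the top-left $n'\times n'$ submatrix of $\hat{\mathbf D}$. If $\hat{\mathbf A}$ and $\hat{\mathbf B}\hat{\mathbf B}^\intercal$ are both diagonal, then the unique solution of \[\operatorname*{argmin}_{\mathbf D\in\mathbb{R}^{n'\times n'}}\|\hat{\mathbf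 C}'-\hat{\mathbf A}'\mathbf D\hat{\mathbf B}'\|^2\quad\text{subject to}\quad\mathbf D^\intercal=\pm\mathbf D\] is given by the truncation $\hat{\mathbf D}'$.
   Context: A POD basis is a matrix $\mathbf U\in\mathbb{R}^{N\times n}$ whose columns are the first $n$ left singular vectors (ordered by decreasing singular value) of a snapshot data matrix; in particular $\mathbf U^\intercal\mathbf U=\mathbf I$. $\|\cdot\|$ is the Frobenius norm. *)

theory Defs
  imports "Jordan_Normal_Form.Matrix"
begin

definition frob_sq :: "real mat \<Rightarrow> real" where
  "frob_sq M = (\<Sum>i<dim_row M. \<Sum>j<dim_col M. (M $$ (i,j))^2)"

definition first_cols :: "nat \<Rightarrow> 'a mat \<Rightarrow> 'a mat" where
  "first_cols k M = mat (dim_row M) k (\<lambda>(i,j). M $$ (i,j))"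

definition top_left :: "nat \<Rightarrow> 'a mat \<Rightarrow> 'a mat" where
  "top_left k M = mat k k (\<lambda>(i,j). M $$ (i,j))"

definition is_POD_basis :: "real mat \<Rightarrow> real mat \<Rightarrow> nat \<Rightarrow> nat \<Rightarrow> bool" where
  "is_POD_basis U X N n \<longleftrightarrow> n \<le> N \<and> dim_row X = N \<and>
     (\<exists>W S V. W \<in> carrier_mat N N \<and> V \<in> carrier_mat (dim_col X) (dim_col X) \<and>
        S \<in> carrier_mat N (dim_col X) \<and>
        transpose_mat W * W = 1\<^sub>m N \<and> transpose_mat V * V = 1\<^sub>m (dim_col X) \<and>
        (\<forall>i<N. \<forall>j<dim_col X. i \<noteq> j \<longrightarrow> S $$ (i,j) = 0) \<and>
        (\<forall>i<min N (dim_col X). S $$ (i,i) \<ge> 0) \<and>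
        (\<forall>i j. i \<le> j \<longrightarrow> j < min N (dim_col X) \<longrightarrow> S $$ (j,j) \<le> S $$ (i,i)) \<and>
        X = W * S * transpose_mat V \<and>
        U = first_cols n W)"

definition ls_obj :: "real mat \<Rightarrow> real mat \<Rightarrow> real mat \<Rightarrow> real mat \<Rightarrow> real" where
  "ls_obj C A B D = frob_sq (C - A * D * B)"

definition feasible :: "real \<Rightarrow> nat \<Rightarrow> real mat \<Rightarrow> bool" where
  "feasible s m D \<longleftrightarrow> D \<in> carrier_mat m m \<and> transpose_mat D = s \<cdot>\<^sub>m D"

definition is_unique_argmin ::
  "real mat \<Rightarrow> real mat \<Rightarrow> real mat \<Rightarrow> real \<Rightarrow> nat \<Rightarrow> real mat \<Rightarrow> bool" where
  "is_unique_argmin C A B s m D0 \<longleftrightarrow>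
     feasible s m D0 \<and>
     (\<forall>D. feasible s m D \<longrightarrow> ls_obj C A B D0 \<le> ls_obj C A B D) \<and>
     (\<forall>D. feasible s m D \<longrightarrow> ls_obj C A B D \<le> ls_obj C A B D0 \<longrightarrow> D = D0)"

end

theory Submission
  imports Defs
begin

lemma mult_entry:
  assumes "i < dim_row X" "j < dim_col Y" "dim_col X = dim_row Y"
  shows "(X*Y)$$(i,j) = (\<Sum>k<dim_col X. X$$(i,k)*Y$$(k,j))"
  using assms by (simp add: scalar_prod_def lessThan_atLeast0)

definition FF :: "real \<Rightarrow> (nat \<Rightarrow> real) \<Rightarrow> (nat \<Rightarrow> real) \<Rightarrow> nat \<Rightarrow> real \<Rightarrow> real" where
  "FF a b c ns x = a^2*(\<Sum>k<ns. (b k)^2)*x^2 - 2*a*x*(\<Sum>k<ns. c k * b k)"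

lemma row_formula:
  fixes a :: real and b :: "nat \<Rightarrow> nat \<Rightarrow> real"
  assumes orth: "\<forall>j<n. \<forall>l<n. j\<noteq>l \<longrightarrow> (\<Sum>k<ns. b j k * b l k) = 0"
  shows "(\<Sum>k<ns. (c k - a * (\<Sum>j<n. d j * b j k))^2)
    = (\<Sum>k<ns. (c k)^2) + (\<Sum>j<n. FF a (b j) c ns (d j))"
proof -
  have sq: "(\<Sum>k<ns. (\<Sum>j<n. d j * b j k)^2) = (\<Sum>j<n. (d j)^2 * (\<Sum>k<ns. (b j k)^2))"
  proof -
    have "(\<Sum>k<ns. (\<Sum>j<n. d j * b j k)^2) = (\<Sum>k<ns. \<Sum>j<n. \<Sum>l<n. d j * d l * (b j k * b l k))"
      by (simp add: power2_eq_square sum_product algebra_simps)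
    also have "\<dots> = (\<Sum>j<n. \<Sum>l<n. d j * d l * (\<Sum>k<ns. b j k * b l k))"
      by (simp add: sum_distrib_left sum.swap[of _ "{..<ns}"])
    also have "\<dots> = (\<Sum>j<n. \<Sum>l<n. if l = j then d j * d j * (\<Sum>k<ns. b j k * b j k) else 0)"
      using orth by (intro sum.cong refl) auto
    also have "\<dots> = (\<Sum>j<n. (d j)^2 * (\<Sum>k<ns. (b j k)^2))"
      by (simp add: power2_eq_square)
    finally show ?thesis .
  qed
  have lin: "(\<Sum>k<ns. c k * (\<Sum>j<n. d j * b j k)) = (\<Sum>j<n. d j * (\<Sum>k<ns. c k * b j k))"
    by (simp add: sum_distrib_left sum.swap[of _ "{..<ns}"] algebra_simps)
  have "(\<Sum>k<ns. (c k - a * (\<Sum>j<n. d j * b j k))^2)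
     = (\<Sum>k<ns. (c k)^2) - 2*a*(\<Sum>k<ns. c k * (\<Sum>j<n. d j * b j k)) + a^2 * (\<Sum>k<ns. (\<Sum>j<n. d j * b j k)^2)"
  proof -
    have "\<And>k. (c k - a * (\<Sum>j<n. d j * b j k))^2 = (c k)^2 - 2*a*(c k * (\<Sum>j<n. d j * b j k)) + a^2 * (\<Sum>j<n. d j * b j k)^2"
      by (simp add: power2_eq_square algebra_simps)
    then show ?thesis by (simp add: sum.distrib sum_subtractf sum_distrib_left)
  qed
  also have "\<dots> = (\<Sum>k<ns. (c k)^2) + (\<Sum>j<n. FF a (b j) c ns (d j))"
    unfolding sq lin FF_def by (simp add: sum_distrib_left sum_subtractf algebra_simps)
  finally show ?thesis .
qed

lemma obj_formula:
  assumes dims: "Ah \<in> carrier_mat m m" "Bh \<in> carrier_mat m ns" "Ch \<in> carrier_mat m ns" "D \<in> carrier_mat m m"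
  and diag: "\<forall>i<m. \<forall>j<m. i\<noteq>j \<longrightarrow> Ah$$(i,j) = 0"
  and orth: "\<forall>j<m. \<forall>l<m. j\<noteq>l \<longrightarrow> (\<Sum>k<ns. Bh$$(j,k)*Bh$$(l,k)) = 0"
  shows "ls_obj Ch Ah Bh D = (\<Sum>i<m. \<Sum>k<ns. (Ch$$(i,k))^2)
     + (\<Sum>i<m. \<Sum>j<m. FF (Ah$$(i,i)) (\<lambda>k. Bh$$(j,k)) (\<lambda>k. Ch$$(i,k)) ns (D$$(i,j)))"
proof -
  have AD: "(Ah*D)$$(i,j) = Ah$$(i,i) * D$$(i,j)" if "i<m" "j<m" for i j
  proof -
    have "(Ah*D)$$(i,j) = (\<Sum>l<m. Ah$$(i,l)*D$$(l,j))"
      using dims that by (subst mult_entry) auto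
    also have "\<dots> = (\<Sum>l<m. if l = i then Ah$$(i,i) * D$$(i,j) else 0)"
      using diag that by (intro sum.cong refl) auto
    finally show ?thesis using that by simp
  qed
  have ent: "(Ch - Ah*D*Bh)$$(i,k) = Ch$$(i,k) - Ah$$(i,i) * (\<Sum>j<m. D$$(i,j) * Bh$$(j,k))"
    if "i<m" "k<ns" for i k
  proof -
    have "(Ah*D*Bh)$$(i,k) = (\<Sum>j<m. (Ah*D)$$(i,j)*Bh$$(j,k))"
      using dims that by (subst mult_entry) auto
    also have "\<dots> = Ah$$(i,i) * (\<Sum>j<m. D$$(i,j) * Bh$$(j,k))"
      using that by (simp add: AD sum_distrib_left mult.assoc)
    finally show ?thesis using dims that by simp
  qed
  have "ls_obj Ch Ah Bh D = (\<Sum>i<m. \<Sum>k<ns. (Ch$$(i,k) - Ah$$(i,i) * (\<Sum>j<m. D$$(i,j) * Bh$$(j,k)))^2)"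
  proof -
    have "dim_row (Ch - Ah*D*Bh) = m" "dim_col (Ch - Ah*D*Bh) = ns" using dims by auto
    then show ?thesis unfolding ls_obj_def frob_sq_def
      by (simp only:) (intro sum.cong refl, simp only: ent lessThan_iff)
  qed
  also have "\<dots> = (\<Sum>i<m. (\<Sum>k<ns. (Ch$$(i,k))^2) + (\<Sum>j<m. FF (Ah$$(i,i)) (\<lambda>k. Bh$$(j,k)) (\<lambda>k. Ch$$(i,k)) ns (D$$(i,j))))"
    by (intro sum.cong refl row_formula[where b="\<lambda>j k. Bh$$(j,k)", simplified] orth)
  also have "\<dots> = (\<Sum>i<m. \<Sum>k<ns. (Ch$$(i,k))^2)
     + (\<Sum>i<m. \<Sum>j<m. FF (Ah$$(i,i)) (\<lambda>k. Bh$$(j,k)) (\<lambda>k. Ch$$(i,k)) ns (D$$(i,j)))"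
    by (simp add: sum.distrib)
  finally show ?thesis .
qed

lemma block_diff:
  fixes f :: "nat \<Rightarrow> nat \<Rightarrow> real \<Rightarrow> real"
  assumes "n' \<le> n" and XY: "\<And>i j. \<not>(i<n' \<and> j<n') \<Longrightarrow> X i j = Y i j"
  shows "(\<Sum>i<n. \<Sum>j<n. f i j (X i j)) - (\<Sum>i<n. \<Sum>j<n. f i j (Y i j))
    = (\<Sum>i<n'. \<Sum>j<n'. f i j (X i j)) - (\<Sum>i<n'. \<Sum>j<n'. f i j (Y i j))"
proof -
  define t where "t i j = f i j (X i j) - f i j (Y i j)" for i j
  have "(\<Sum>i<n. \<Sum>j<n. f i j (X i j)) - (\<Sum>i<n. \<Sum>j<n. f i j (Y i j)) = (\<Sum>i<n. \<Sum>j<n. t i j)"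
    by (simp add: t_def sum_subtractf)
  also have "\<dots> = (\<Sum>i<n'. \<Sum>j<n. t i j)"
    using assms by (intro sum.mono_neutral_right) (auto simp: t_def)
  also have "\<dots> = (\<Sum>i<n'. \<Sum>j<n'. t i j)"
    using assms by (intro sum.cong refl sum.mono_neutral_right) (auto simp: t_def)
  also have "\<dots> = (\<Sum>i<n'. \<Sum>j<n'. f i j (X i j)) - (\<Sum>i<n'. \<Sum>j<n'. f i j (Y i j))"
    by (simp add: t_def sum_subtractf)
  finally show ?thesis .
qed

lemma feasible_entry:
  assumes "feasible s m D" "i<m" "j<m"
  shows "D$$(j,i) = s * D$$(i,j)"
proof -
  have c: "D \<in> carrier_mat m m" and t: "transpose_mat D = s \<cdot>\<^sub>m D" using assms(1) unfolding feasible_def by auto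
  have "transpose_mat D $$ (i,j) = (s \<cdot>\<^sub>m D) $$ (i,j)" using t by simp
  then show ?thesis using c assms by simp
qed

theorem proposition2:
  fixes A B C U X Dh :: "real mat" and N n ns n' :: nat and s :: real
  assumes "A \<in> carrier_mat N N" "B \<in> carrier_mat N ns" "C \<in> carrier_mat N ns"
    and "s = 1 \<or> s = -1"
    and "is_POD_basis U X N n"
    and "is_unique_argmin (transpose_mat U * C) (transpose_mat U * A * U)
           (transpose_mat U * B) s n Dh"
    and "n' < n"
    and "diagonal_mat (transpose_mat U * A * U)"
    and "diagonal_mat ((transpose_mat U * B) * transpose_mat (transpose_mat U * B))"
  shows "is_unique_argmin (transpose_mat (first_cols n' U) * C)
           (transpose_mat (first_cols n' U) * A * first_cols n' U)
           (transpose_mat (first_cols n' U) * B) s n' (top_left n' Dh)"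
proof -
  note AC = assms(1) and BC = assms(2) and CC = assms(3)
  obtain W where W: "W \<in> carrier_mat N N" and UW: "U = first_cols n W"
    using assms(5) unfolding is_POD_basis_def by blast
  have UC: "U \<in> carrier_mat N n" using W UW by (auto simp: first_cols_def)
  define U' where "U' = first_cols n' U"
  have U'C: "U' \<in> carrier_mat N n'" using UC by (auto simp: first_cols_def U'_def)
  have U'e: "U'$$(r,i) = U$$(r,i)" if "r<N" "i<n'" for r i
    using UC that by (auto simp: first_cols_def U'_def)
  have L: "(transpose_mat U' * M)$$(i,k) = (transpose_mat U * M)$$(i,k)"
    if "dim_row M = N" "i<n'" "k<dim_col M" for M i k
  proof -
    have "(transpose_mat U' * M)$$(i,k) = (\<Sum>r<N. transpose_mat U'$$(i,r) * M$$(r,k))"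
      using that U'C by (subst mult_entry) auto
    also have "\<dots> = (\<Sum>r<N. transpose_mat U$$(i,r) * M$$(r,k))"
      using that U'C UC \<open>n'<n\<close> by (intro sum.cong refl) (auto simp: U'e)
    also have "\<dots> = (transpose_mat U * M)$$(i,k)"
      using that UC \<open>n'<n\<close> by (subst mult_entry) auto
    finally show ?thesis .
  qed
  define Ah where "Ah = transpose_mat U * A * U"
  define Bh where "Bh = transpose_mat U * B"
  define Ch where "Ch = transpose_mat U * C"
  define Ah' where "Ah' = transpose_mat U' * A * U'"
  define Bh' where "Bh' = transpose_mat U' * B"
  define Ch' where "Ch' = transpose_mat U' * C"
  have AhC: "Ah \<in> carrier_mat n n" "Bh \<in> carrier_mat n ns" "Ch \<in> carrier_mat n ns"
    using UC AC BC CC by (auto simp: Ah_def Bh_def Ch_def)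
  have Ah'C: "Ah' \<in> carrier_mat n' n'" "Bh' \<in> carrier_mat n' ns" "Ch' \<in> carrier_mat n' ns"
    using U'C AC BC CC by (auto simp: Ah'_def Bh'_def Ch'_def)
  have Bh'e: "Bh'$$(i,k) = Bh$$(i,k)" if "i<n'" "k<ns" for i k
    unfolding Bh'_def Bh_def using L[of B i k] that BC by auto
  have Ch'e: "Ch'$$(i,k) = Ch$$(i,k)" if "i<n'" "k<ns" for i k
    unfolding Ch'_def Ch_def using L[of C i k] that CC by auto
  have Ah'e: "Ah'$$(i,j) = Ah$$(i,j)" if "i<n'" "j<n'" for i j
  proof -
    have "Ah'$$(i,j) = (\<Sum>q<N. (transpose_mat U' * A)$$(i,q) * U'$$(q,j))"
      unfolding Ah'_def using that U'C AC by (subst mult_entry) auto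
    also have "\<dots> = (\<Sum>q<N. (transpose_mat U * A)$$(i,q) * U$$(q,j))"
      using that AC by (intro sum.cong refl) (auto simp: U'e L)
    also have "\<dots> = Ah$$(i,j)"
      unfolding Ah_def using that UC AC \<open>n'<n\<close> by (subst mult_entry) auto
    finally show ?thesis .
  qed
  have diagA: "\<forall>i<n. \<forall>j<n. i\<noteq>j \<longrightarrow> Ah$$(i,j) = 0"
    using assms(8) AhC unfolding diagonal_mat_def Ah_def by auto
  have diagA': "\<forall>i<n'. \<forall>j<n'. i\<noteq>j \<longrightarrow> Ah'$$(i,j) = 0"
    using diagA \<open>n'<n\<close> by (auto simp: Ah'e)
  have orth: "\<forall>j<n. \<forall>l<n. j\<noteq>l \<longrightarrow> (\<Sum>k<ns. Bh$$(j,k)*Bh$$(l,k)) = 0"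
  proof (intro allI impI)
    fix j l assume jl: "j<n" "l<n" "j\<noteq>l"
    have "(Bh * transpose_mat Bh)$$(j,l) = 0"
      using assms(9) jl AhC unfolding diagonal_mat_def Bh_def by auto
    moreover have "(Bh * transpose_mat Bh)$$(j,l) = (\<Sum>k<ns. Bh$$(j,k)*Bh$$(l,k))"
      using jl AhC by (subst mult_entry) auto
    ultimately show "(\<Sum>k<ns. Bh$$(j,k)*Bh$$(l,k)) = 0" by simp
  qed
  have orth': "\<forall>j<n'. \<forall>l<n'. j\<noteq>l \<longrightarrow> (\<Sum>k<ns. Bh'$$(j,k)*Bh'$$(l,k)) = 0"
    using orth \<open>n'<n\<close> by (auto simp: Bh'e)
  define G where "G m D = (\<Sum>i<m. \<Sum>j<m. FF (Ah$$(i,i)) (\<lambda>k. Bh$$(j,k)) (\<lambda>k. Ch$$(i,k)) ns (D$$(i,j)))" for m D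
  define K where "K = (\<Sum>i<n. \<Sum>k<ns. (Ch$$(i,k))^2)"
  define K' where "K' = (\<Sum>i<n'. \<Sum>k<ns. (Ch'$$(i,k))^2)"
  have objF: "ls_obj Ch Ah Bh D = K + G n D" if "D \<in> carrier_mat n n" for D
    unfolding K_def G_def by (rule obj_formula[OF AhC that diagA orth])
  have s1: "(\<Sum>k<ns. (Bh'$$(j,k))^2) = (\<Sum>k<ns. (Bh$$(j,k))^2)" if "j<n'" for j
    using that by (intro sum.cong refl) (simp add: Bh'e)
  have s2: "(\<Sum>k<ns. Ch'$$(i,k) * Bh'$$(j,k)) = (\<Sum>k<ns. Ch$$(i,k) * Bh$$(j,k))" if "i<n'" "j<n'" for i j
    using that by (intro sum.cong refl) (simp add: Bh'e Ch'e)
  have objP: "ls_obj Ch' Ah' Bh' D = K' + G n' D" if "D \<in> carrier_mat n' n'" for D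
    unfolding K'_def G_def obj_formula[OF Ah'C that diagA' orth']
    by (intro arg_cong2[where f="(+)"] sum.cong refl) (auto simp: Ah'e s1 s2 FF_def)
  have Dh: "is_unique_argmin Ch Ah Bh s n Dh" using assms(6) by (simp add: Ah_def Bh_def Ch_def)
  have DhF: "feasible s n Dh" using Dh unfolding is_unique_argmin_def by blast
  have DhC: "Dh \<in> carrier_mat n n" using DhF unfolding feasible_def by blast
  define TL where "TL = top_left n' Dh"
  have TLC: "TL \<in> carrier_mat n' n'" by (simp add: TL_def top_left_def)
  have TLe: "TL$$(i,j) = Dh$$(i,j)" if "i<n'" "j<n'" for i j using that by (simp add: TL_def top_left_def)
  have TLF: "feasible s n' TL"
    unfolding feasible_def
  proof (intro conjI TLC eq_matI)
    fix i j assume "i < dim_row (s \<cdot>\<^sub>m TL)" "j < dim_col (s \<cdot>\<^sub>m TL)"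
    then have ij: "i<n'" "j<n'" using TLC by auto
    then show "transpose_mat TL $$ (i,j) = (s \<cdot>\<^sub>m TL) $$ (i,j)"
      using TLC feasible_entry[OF DhF, of i j] \<open>n'<n\<close> by (simp add: TLe)
  qed (use TLC in auto)
  define E where "E D' = mat n n (\<lambda>(i,j). if i<n' \<and> j<n' then D'$$(i,j) else Dh$$(i,j))" for D'
  have EC: "E D' \<in> carrier_mat n n" for D' by (simp add: E_def)
  have EF: "feasible s n (E D')" if F: "feasible s n' D'" for D'
    unfolding feasible_def
  proof (intro conjI EC eq_matI)
    fix i j assume "i < dim_row (s \<cdot>\<^sub>m E D')" "j < dim_col (s \<cdot>\<^sub>m E D')"
    then have ij: "i<n" "j<n" by (auto simp: E_def)
    then show "transpose_mat (E D') $$ (i,j) = (s \<cdot>\<^sub>m E D') $$ (i,j)"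
      using feasible_entry[OF DhF, of i j] feasible_entry[OF F, of i j] by (auto simp: E_def)
  qed (auto simp: E_def)
  have ETL: "top_left n' (E D') = D'" if "D' \<in> carrier_mat n' n'" for D'
    using that \<open>n'<n\<close> by (intro eq_matI) (auto simp: top_left_def E_def)
  have Gdiff: "G n (E D') - G n Dh = G n' D' - G n' TL" if "D' \<in> carrier_mat n' n'" for D'
  proof -
    define f where "f i j x = FF (Ah$$(i,i)) (\<lambda>k. Bh$$(j,k)) (\<lambda>k. Ch$$(i,k)) ns x" for i j x
    define X where "X i j = (if i<n' \<and> j<n' then D'$$(i,j) else Dh$$(i,j))" for i j
    define Y where "Y i j = Dh$$(i,j)" for i j
    have "G n (E D') = (\<Sum>i<n. \<Sum>j<n. f i j (X i j))"
      unfolding G_def f_def X_def E_def by (intro sum.cong refl) auto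
    moreover have "G n Dh = (\<Sum>i<n. \<Sum>j<n. f i j (Y i j))"
      unfolding G_def f_def Y_def by simp
    moreover have "G n' D' = (\<Sum>i<n'. \<Sum>j<n'. f i j (X i j))"
      unfolding G_def f_def X_def by (intro sum.cong refl) auto
    moreover have "G n' TL = (\<Sum>i<n'. \<Sum>j<n'. f i j (Y i j))"
      unfolding G_def f_def Y_def by (intro sum.cong refl) (auto simp: TLe)
    moreover have "(\<Sum>i<n. \<Sum>j<n. f i j (X i j)) - (\<Sum>i<n. \<Sum>j<n. f i j (Y i j))
      = (\<Sum>i<n'. \<Sum>j<n'. f i j (X i j)) - (\<Sum>i<n'. \<Sum>j<n'. f i j (Y i j))"
      using \<open>n'<n\<close> by (intro block_diff) (auto simp: X_def Y_def)
    ultimately show ?thesis by simp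
  qed
  have "is_unique_argmin Ch' Ah' Bh' s n' TL"
    unfolding is_unique_argmin_def
  proof (intro conjI TLF allI impI)
    fix D' assume F: "feasible s n' D'"
    then have D'C: "D' \<in> carrier_mat n' n'" unfolding feasible_def by blast
    have "ls_obj Ch Ah Bh Dh \<le> ls_obj Ch Ah Bh (E D')"
      using Dh EF[OF F] unfolding is_unique_argmin_def by blast
    then have "G n Dh \<le> G n (E D')" using objF[OF DhC] objF[OF EC] by simp
    then show "ls_obj Ch' Ah' Bh' TL \<le> ls_obj Ch' Ah' Bh' D'"
      using Gdiff[OF D'C] objP[OF D'C] objP[OF TLC] by simp
  next
    fix D' assume F: "feasible s n' D'" and le: "ls_obj Ch' Ah' Bh' D' \<le> ls_obj Ch' Ah' Bh' TL"
    then have D'C: "D' \<in> carrier_mat n' n'" unfolding feasible_def by blast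
    have "G n (E D') \<le> G n Dh"
      using le Gdiff[OF D'C] objP[OF D'C] objP[OF TLC] by simp
    then have "ls_obj Ch Ah Bh (E D') \<le> ls_obj Ch Ah Bh Dh" using objF[OF DhC] objF[OF EC] by simp
    then have "E D' = Dh" using Dh EF[OF F] unfolding is_unique_argmin_def by blast
    then show "D' = TL" using ETL[OF D'C] by (simp add: TL_def)
  qed
  then show ?thesis by (simp add: Ah'_def Bh'_def Ch'_def U'_def TL_def)
qed

end
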